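(* Let $R$ be an associative ring with identity and involution $*$, and let $a\in R^{\#}\cap R^{\dagger}$. Then $a\in R^{SEP}$ if and only if $(a(a^{\#})^*a^{\dagger})^k=(a^{\dagger}a^2)^k$ for both $k=2$ and $k=3$.
   Context: An involution on $R$ is a map $x\mapsto x^*$ with $(x^* )^*=x$, $(x+y)^*=x^*+y^*$, $(xy)^*=y^*x^*$. An element $a$ is Moore–Penrose invertible if there is $b$ with $aba=a$, $bab=b$, $(ab)^*=ab$, $(ba)^*=ba$; such $b$ is unique, denoted $a^{\dagger}$, and $R^{\dagger}$ is the set of such $a$. An element $a$ is group invertible if there is $b$ with $aba=a$, $bab=b$, $ab=ba$; such $b$ is unique, denoted $a^{\#}$, and $R^{\#}$ is the set of such $a$. For $a\in R^{\#}\cap R^{\dagger}$, $a$ is SEP if $a^*=a^{\dagger}=a^{\#}$; $R^{SEP}$ denotes the set of SEP elements. *)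

theory Defs
  imports Main
begin

definition involution :: "('a::ring_1 \<Rightarrow> 'a) \<Rightarrow> bool" where
  "involution s \<longleftrightarrow> (\<forall>x. s (s x) = x) \<and> (\<forall>x y. s (x + y) = s x + s y)
     \<and> (\<forall>x y. s (x * y) = s y * s x)"

definition is_mp_inv :: "('a::ring_1 \<Rightarrow> 'a) \<Rightarrow> 'a \<Rightarrow> 'a \<Rightarrow> bool" where
  "is_mp_inv s a b \<longleftrightarrow> a * b * a = a \<and> b * a * b = b \<and> s (a * b) = a * b \<and> s (b * a) = b * a"

definition mp_invertible :: "('a::ring_1 \<Rightarrow> 'a) \<Rightarrow> 'a \<Rightarrow> bool" where
  "mp_invertible s a \<longleftrightarrow> (\<exists>b. is_mp_inv s a b)"

definition mp_inv :: "('a::ring_1 \<Rightarrow> 'a) \<Rightarrow> 'a \<Rightarrow> 'a" where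
  "mp_inv s a = (THE b. is_mp_inv s a b)"

definition is_group_inv :: "'a::ring_1 \<Rightarrow> 'a \<Rightarrow> bool" where
  "is_group_inv a b \<longleftrightarrow> a * b * a = a \<and> b * a * b = b \<and> a * b = b * a"

definition group_invertible :: "'a::ring_1 \<Rightarrow> bool" where
  "group_invertible a \<longleftrightarrow> (\<exists>b. is_group_inv a b)"

definition group_inv :: "'a::ring_1 \<Rightarrow> 'a" where
  "group_inv a = (THE b. is_group_inv a b)"

definition is_SEP :: "('a::ring_1 \<Rightarrow> 'a) \<Rightarrow> 'a \<Rightarrow> bool" where
  "is_SEP s a \<longleftrightarrow> group_invertible a \<and> mp_invertible s a
     \<and> s a = mp_inv s a \<and> mp_inv s a = group_inv a"

end

theory Submission
  imports Defs
begin

lemma mp_unique: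
  assumes inv: "involution s" and b: "is_mp_inv s a b" and c: "is_mp_inv s a c"
  shows "b = c"
proof -
  have sm: "\<And>x y. s (x * y) = s y * s x" and ss: "\<And>x. s (s x) = x"
    using inv by (auto simp: involution_def)
  have b1: "a*b*a = a" "b*a*b = b" "s (a*b) = a*b" "s (b*a) = b*a" using b by (auto simp: is_mp_inv_def)
  have c1: "a*c*a = a" "c*a*c = c" "s (a*c) = a*c" "s (c*a) = c*a" using c by (auto simp: is_mp_inv_def)
  have "b = b * s (a*b)" using b1 by (simp add: mult.assoc)
  also have "\<dots> = b * s b * s a" by (simp add: sm mult.assoc)
  also have "s a = s (a*c*a)" using c1 by simp
  also have "b * s b * s (a*c*a) = b * (s (a*b) * s (a*c))" by (simp add: sm mult.assoc)
  also have "\<dots> = b * a * c"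
  proof -
    have bz: "\<And>z. b*(a*(b*z)) = b*z" using b1(2) by (metis mult.assoc)
    show ?thesis using b1 c1 by (simp add: mult.assoc bz)
  qed
  finally have B: "b = b*a*c" using b1 by (simp add: mult.assoc)
  have "c = s (c*a) * c" using c1 by simp
  also have "\<dots> = s a * s c * c" by (simp add: sm mult.assoc)
  also have "s a = s (a*b*a)" using b1 by simp
  also have "s (a*b*a) * s c * c = (s (b*a) * s (c*a)) * c" by (simp add: sm mult.assoc)
  also have "\<dots> = b * a * c" using b1 c1 by (simp add: mult.assoc)
  finally show ?thesis using B by simp
qed

lemma mp_inv_eq: "involution s \<Longrightarrow> is_mp_inv s a b \<Longrightarrow> mp_inv s a = b"
  unfolding mp_inv_def by (rule the_equality) (auto intro: mp_unique)

lemma group_unique: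
  assumes b: "is_group_inv a b" and c: "is_group_inv a c"
  shows "b = c"
proof -
  have b1: "a*b*a = a" "b*a*b = b" "a*b = b*a" using b by (auto simp: is_group_inv_def)
  have c1: "a*c*a = a" "c*a*c = c" "a*c = c*a" using c by (auto simp: is_group_inv_def)
  have "b = b*(a*b)" using b1 by (simp add: mult.assoc)
  also have "\<dots> = b*b*(a*c*a)" by (metis b1(3) c1(1) mult.assoc)
  also have "\<dots> = b*(b*a*a)*c" by (metis c1(3) mult.assoc)
  also have "b*a*a = a" using b1 by (metis mult.assoc)
  finally have B: "b = b*a*c" by (simp add: mult.assoc)
  have "c = (c*a)*c" using c1 by (simp add: mult.assoc)
  also have "\<dots> = (a*b*a)*c*c" using c1 b1 by (simp add: mult.assoc)
  also have "\<dots> = b*(a*a*c)*c" by (metis b1(3) mult.assoc)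
  also have "a*a*c = a" using c1 by (metis mult.assoc)
  finally show ?thesis using B by (simp add: mult.assoc)
qed

lemma group_inv_eq: "is_group_inv a b \<Longrightarrow> group_inv a = b"
  unfolding group_inv_def by (rule the_equality) (auto intro: group_unique)

theorem theorem4p1:
  fixes s :: "'a::ring_1 \<Rightarrow> 'a" and a :: 'a
  assumes "involution s"
    and "group_invertible a" and "mp_invertible s a"
  shows "is_SEP s a \<longleftrightarrow>
    (\<forall>k\<in>{2::nat, 3}. (a * s (group_inv a) * mp_inv s a) ^ k = (mp_inv s a * a ^ 2) ^ k)"
proof -
  have sm: "\<And>x y. s (x * y) = s y * s x" and ss: "\<And>x. s (s x) = x"
    using assms(1) by (auto simp: involution_def)
  obtain g where g: "is_group_inv a g" using assms(2) group_invertible_def by blast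
  obtain m where m: "is_mp_inv s a m" using assms(3) mp_invertible_def by blast
  have gi: "group_inv a = g" using g by (rule group_inv_eq)
  have mi: "mp_inv s a = m" using assms(1) m by (rule mp_inv_eq)
  have g1: "a*g*a = a" "g*a*g = g" "a*g = g*a" using g by (auto simp: is_group_inv_def)
  have m1: "a*m*a = a" "m*a*m = m" "s (a*m) = a*m" "s (m*a) = m*a" using m by (auto simp: is_mp_inv_def)
  have A1: "\<And>z. a*(m*(a*z)) = a*z" using m1(1) by (metis mult.assoc)
  have M1: "\<And>z. m*(a*(m*z)) = m*z" using m1(2) by (metis mult.assoc)
  have GA: "\<And>z. a*(g*z) = g*(a*z)" using g1(3) by (metis mult.assoc)
  have GA1: "\<And>z. g*(a*(a*z)) = a*z" using g1(1) GA by (metis mult.assoc)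
  have GA2: "\<And>z. g*(g*(a*z)) = g*z" using g1(2) GA by (metis mult.assoc)
  define G where "G = s g"
  have sa: "s a = m*a*s a"
  proof -
    have "s a = s (a*(m*a))" using m1 by (simp add: mult.assoc)
    also have "\<dots> = s (m*a) * s a" by (simp add: sm)
    finally show ?thesis using m1 by simp
  qed
  have gga: "g = g*g*a" using GA2[of 1] by (simp add: mult.assoc)
  have GG: "G = s a * G * G" unfolding G_def
    by (subst gga) (simp add: sm mult.assoc)
  have maG: "m*a*G = G"
  proof -
    have "m*a*G = m*a*s a*G*G" using GG by (simp add: mult.assoc)
    also have "\<dots> = s a * G * G" using sa by simp
    finally show ?thesis using GG by simp
  qed
  have maGz: "\<And>z. m*(a*(G*z)) = G*z" using maG by (metis mult.assoc)
  define x where "x = a*G*m"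
  define y where "y = m*a*a"
  have x2: "x^2 = a*G*G*m" unfolding x_def power2_eq_square
    by (simp add: mult.assoc maGz)
  have x3: "x^3 = a*G*G*G*m" unfolding x_def power3_eq_cube
    by (simp add: mult.assoc maGz)
  have y2: "y^2 = m*a*a*a" unfolding y_def power2_eq_square
    by (simp add: mult.assoc A1)
  have y3: "y^3 = m*a*a*a*a" unfolding y_def power3_eq_cube
    by (simp add: mult.assoc A1)
  have goal: "is_SEP s a \<longleftrightarrow> (x^2 = y^2 \<and> x^3 = y^3)"
  proof
    assume sep: "is_SEP s a"
    then have e1: "s a = m" "m = g" using gi mi by (auto simp: is_SEP_def)
    have Ga: "G = a" unfolding G_def using e1 ss by metis
    have xa: "x = a" unfolding x_def Ga using GA1[of 1] e1 g1(3) by (simp add: mult.assoc GA)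
    have ya: "y = a" unfolding y_def using GA1[of 1] e1 by (simp add: mult.assoc)
    show "x^2 = y^2 \<and> x^3 = y^3" using xa ya by simp
  next
    assume h: "x^2 = y^2 \<and> x^3 = y^3"
    have E2: "a*G*G*m = m*a*a*a" using h x2 y2 by simp
    have E3: "a*G*G*G*m = m*a*a*a*a" using h x3 y3 by simp
    have "m*a*a*a*a*m = a*G*G*m*a*m" using E2 by simp
    also have "\<dots> = a*G*G*m" using M1[of 1] by (simp add: mult.assoc)
    finally have "m*a*a*a*a*m = m*a*a*a" using E2 by simp
    then have "a*(m*a*a*a*a*m) = a*(m*a*a*a)" by simp
    then have a4: "a*a*a*a*m = a*a*a" by (simp add: mult.assoc A1)
    have "g*g*g*(a*a*a*a*m) = g*g*g*(a*a*a)" using a4 by simp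
    moreover have "g*g*g*(a*a*a*a*m) = a*m" by (simp add: mult.assoc GA1)
    moreover have "g*g*g*(a*a*a) = g*a" using GA1[of 1] by (simp add: mult.assoc GA1)
    ultimately have amag: "a*m = a*g" using g1(3) by simp
    have sp: "s (a*g) = a*g" using amag m1 by simp
    have ismg: "is_mp_inv s a g" unfolding is_mp_inv_def using g1 sp by simp
    have mg: "m = g" using mp_unique[OF assms(1) m ismg] .
    have Gp: "G = a*g*G"
    proof -
      have "G = s (g*(a*g))" unfolding G_def using g1 by (simp add: mult.assoc)
      also have "\<dots> = s (a*g) * G" unfolding G_def by (simp add: sm)
      finally show ?thesis using sp by simp
    qed
    have Gp2: "G = G*(a*g)"
    proof -
      have "G = s ((g*a)*g)" unfolding G_def using g1 by (simp add: mult.assoc)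
      also have "\<dots> = G * s (g*a)" unfolding G_def by (simp add: sm)
      finally show ?thesis using sp g1(3) by simp
    qed
    have Gpz: "\<And>z. a*(g*(G*z)) = G*z" using Gp by (metis mult.assoc)
    have "g*(a*G*G*g) = g*(g*a*a*a)" using E2 mg by simp
    also have "\<dots> = a" using GA1 GA2 GA1[of 1] by (simp add: mult.assoc)
    finally have "g*(a*(G*(G*g))) = a" by (simp add: mult.assoc)
    then have "G*G*g = a" unfolding GA[of "G*(G*g)", symmetric] Gpz by (simp add: mult.assoc)
    then have "G*G*(g*a) = a*a" by (metis mult.assoc)
    then have G2: "G*G = a*a" using Gp2 g1(3) by (simp add: mult.assoc)
    have "a*G*(G*G)*g = m*a*a*a*a" using E3 mg by (simp add: mult.assoc)
    then have "a*G*(a*a)*g = m*a*a*a*a" unfolding G2 .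
    also have "\<dots> = a*a*a" using mg GA1 by (simp add: mult.assoc)
    finally have "a*G*a*(a*g) = a*a*a" by (simp add: mult.assoc)
    moreover have aag: "a*(a*g) = a" by (metis g1(1) g1(3) mult.assoc)
    ultimately have "a*G*a = a*a*a" by (simp add: mult.assoc)
    then have "g*(a*G*a)*g = g*(a*a*a)*g" by simp
    then have "G = a" using Gp Gp2 GA1[of 1] GA1 g1 by (simp add: mult.assoc GA Gpz)
    then have sag: "s a = g" unfolding G_def using ss by metis
    show "is_SEP s a" unfolding is_SEP_def
      using assms(2,3) gi mi sag mg by simp
  qed
  show ?thesis unfolding goal gi mi x_def y_def G_def by (simp add: power2_eq_square mult.assoc)
qed

end
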